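(* Let $k$ be an infinite field of characteristic $0$, and let $(F,p)$ be the free Lie algebra with projection-derivation over $k$ with free generators $m_1,\dots,m_n$. Put $r=\mathrm{id}_F-p$. Then the representation $(\ker p,\mathrm{im}\,p)$ (with action $l\circ v=[l,v]$) is a free representation with the pair of sets of free generators $\{X,Y\}$, where $X=\{r(m_1),\dots,r(m_n)\}$ and $Y=\{p(m_1),\dots,p(m_n)\}$.
   Context: A Lie algebra with projection-derivation is a Lie algebra $M$ over $k$ with a linear map $p:M\to M$ such that $p(p(m))=p(m)$ and $p[m_1,m_2]=[p(m_1),m_2]+[m_1,p(m_2)]$; homomorphisms are Lie homomorphisms commuting with $p$; these form a variety, so free objects exist. For such $(M,p)$, $\ker p$ is a Lie subalgebra and $\mathrm{im}\,p$ is a $\ker p$-module via $l\circ v=[l,v]$. A representation $(L,V)$ is a Lie algebra $L$ with an $L$-module $V$; a homomorphism $(\varphi,\psi):(L_1,V_1)\to(L_2,V_2)$ is a Lie homomorphism $\varphi$ and linear $\psi$ with $\varphi(l)\circ\psi(v)=\psi(l\circ v)$. $(L,V)$ is free with pair of sets of free generators $\{X,Y\}$ ($X\subset L$, $Y\subset V$) if for every representation $(P,U)$ every pair of maps $X\to P$, $Y\to U$ extends to a homomorphism $(L,V)\to(P,U)$. *)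

theory Defs
  imports Main
begin

record ('k, 'a) vspace =
  vcar  :: "'a set"
  vadd  :: "'a \<Rightarrow> 'a \<Rightarrow> 'a"
  vzero :: "'a"
  vsmul :: "'k \<Rightarrow> 'a \<Rightarrow> 'a"

record ('k, 'a) liealg = "('k, 'a) vspace" +
  lbr :: "'a \<Rightarrow> 'a \<Rightarrow> 'a"

definition vsub :: "('k::field, 'a, 'b) vspace_scheme \<Rightarrow> 'a \<Rightarrow> 'a \<Rightarrow> 'a" where
  "vsub V x y = vadd V x (vsmul V (-1) y)"

definition vector_space_on :: "('k::field, 'a, 'b) vspace_scheme \<Rightarrow> bool" where
  "vector_space_on V \<longleftrightarrow>
     vzero V \<in> vcar V
   \<and> (\<forall>x\<in>vcar V. \<forall>y\<in>vcar V. vadd V x y \<in> vcar V)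
   \<and> (\<forall>a. \<forall>x\<in>vcar V. vsmul V a x \<in> vcar V)
   \<and> (\<forall>x\<in>vcar V. \<forall>y\<in>vcar V. \<forall>z\<in>vcar V. vadd V (vadd V x y) z = vadd V x (vadd V y z))
   \<and> (\<forall>x\<in>vcar V. \<forall>y\<in>vcar V. vadd V x y = vadd V y x)
   \<and> (\<forall>x\<in>vcar V. vadd V (vzero V) x = x)
   \<and> (\<forall>x\<in>vcar V. \<exists>y\<in>vcar V. vadd V x y = vzero V)
   \<and> (\<forall>a. \<forall>x\<in>vcar V. \<forall>y\<in>vcar V. vsmul V a (vadd V x y) = vadd V (vsmul V a x) (vsmul V a y))
   \<and> (\<forall>a b. \<forall>x\<in>vcar V. vsmul V (a + b) x = vadd V (vsmul V a x) (vsmul V b x))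
   \<and> (\<forall>a b. \<forall>x\<in>vcar V. vsmul V a (vsmul V b x) = vsmul V (a * b) x)
   \<and> (\<forall>x\<in>vcar V. vsmul V 1 x = x)"

definition linear_map_on ::
  "('k::field, 'a, 'b) vspace_scheme \<Rightarrow> ('k, 'c, 'd) vspace_scheme \<Rightarrow> ('a \<Rightarrow> 'c) \<Rightarrow> bool" where
  "linear_map_on V W f \<longleftrightarrow>
     (\<forall>x\<in>vcar V. f x \<in> vcar W)
   \<and> (\<forall>x\<in>vcar V. \<forall>y\<in>vcar V. f (vadd V x y) = vadd W (f x) (f y))
   \<and> (\<forall>a. \<forall>x\<in>vcar V. f (vsmul V a x) = vsmul W a (f x))"

definition lie_algebra :: "('k::field, 'a) liealg \<Rightarrow> bool" where
  "lie_algebra L \<longleftrightarrow>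
     vector_space_on L
   \<and> (\<forall>x\<in>vcar L. \<forall>y\<in>vcar L. lbr L x y \<in> vcar L)
   \<and> (\<forall>x\<in>vcar L. \<forall>y\<in>vcar L. \<forall>z\<in>vcar L.
        lbr L (vadd L x y) z = vadd L (lbr L x z) (lbr L y z)
      \<and> lbr L z (vadd L x y) = vadd L (lbr L z x) (lbr L z y))
   \<and> (\<forall>a. \<forall>x\<in>vcar L. \<forall>y\<in>vcar L.
        lbr L (vsmul L a x) y = vsmul L a (lbr L x y)
      \<and> lbr L x (vsmul L a y) = vsmul L a (lbr L x y))
   \<and> (\<forall>x\<in>vcar L. lbr L x x = vzero L)
   \<and> (\<forall>x\<in>vcar L. \<forall>y\<in>vcar L. \<forall>z\<in>vcar L.
        vadd L (vadd L (lbr L x (lbr L y z)) (lbr L y (lbr L z x))) (lbr L z (lbr L x y)) = vzero L)"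

definition lie_hom :: "('k::field, 'a) liealg \<Rightarrow> ('k, 'c) liealg \<Rightarrow> ('a \<Rightarrow> 'c) \<Rightarrow> bool" where
  "lie_hom L M f \<longleftrightarrow> linear_map_on L M f
     \<and> (\<forall>x\<in>vcar L. \<forall>y\<in>vcar L. f (lbr L x y) = lbr M (f x) (f y))"

definition representation ::
  "('k::field, 'a) liealg \<Rightarrow> ('k, 'v) vspace \<Rightarrow> ('a \<Rightarrow> 'v \<Rightarrow> 'v) \<Rightarrow> bool" where
  "representation L V act \<longleftrightarrow>
     lie_algebra L \<and> vector_space_on V
   \<and> (\<forall>l\<in>vcar L. \<forall>v\<in>vcar V. act l v \<in> vcar V)
   \<and> (\<forall>l\<in>vcar L. \<forall>l'\<in>vcar L. \<forall>v\<in>vcar V. act (vadd L l l') v = vadd V (act l v) (act l' v))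
   \<and> (\<forall>a. \<forall>l\<in>vcar L. \<forall>v\<in>vcar V. act (vsmul L a l) v = vsmul V a (act l v))
   \<and> (\<forall>l\<in>vcar L. \<forall>v\<in>vcar V. \<forall>w\<in>vcar V. act l (vadd V v w) = vadd V (act l v) (act l w))
   \<and> (\<forall>a. \<forall>l\<in>vcar L. \<forall>v\<in>vcar V. act l (vsmul V a v) = vsmul V a (act l v))
   \<and> (\<forall>l\<in>vcar L. \<forall>l'\<in>vcar L. \<forall>v\<in>vcar V.
        act (lbr L l l') v = vsub V (act l (act l' v)) (act l' (act l v)))"

definition rep_hom ::
  "('k::field, 'a) liealg \<Rightarrow> ('k, 'v) vspace \<Rightarrow> ('a \<Rightarrow> 'v \<Rightarrow> 'v) \<Rightarrow>
   ('k, 'b) liealg \<Rightarrow> ('k, 'w) vspace \<Rightarrow> ('b \<Rightarrow> 'w \<Rightarrow> 'w) \<Rightarrow>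
   ('a \<Rightarrow> 'b) \<Rightarrow> ('v \<Rightarrow> 'w) \<Rightarrow> bool" where
  "rep_hom L1 V1 act1 L2 V2 act2 \<phi> \<psi> \<longleftrightarrow>
     lie_hom L1 L2 \<phi> \<and> linear_map_on V1 V2 \<psi>
   \<and> (\<forall>l\<in>vcar L1. \<forall>v\<in>vcar V1. act2 (\<phi> l) (\<psi> v) = \<psi> (act1 l v))"

definition lpd :: "('k::field, 'a) liealg \<Rightarrow> ('a \<Rightarrow> 'a) \<Rightarrow> bool" where
  "lpd M p \<longleftrightarrow> lie_algebra M \<and> linear_map_on M M p
     \<and> (\<forall>x\<in>vcar M. p (p x) = p x)
     \<and> (\<forall>x\<in>vcar M. \<forall>y\<in>vcar M. p (lbr M x y) = vadd M (lbr M (p x) y) (lbr M x (p y)))"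

definition lpd_hom ::
  "('k::field, 'a) liealg \<Rightarrow> ('a \<Rightarrow> 'a) \<Rightarrow> ('k, 'c) liealg \<Rightarrow> ('c \<Rightarrow> 'c) \<Rightarrow> ('a \<Rightarrow> 'c) \<Rightarrow> bool" where
  "lpd_hom M p N q h \<longleftrightarrow> lie_hom M N h \<and> (\<forall>x\<in>vcar M. h (p x) = q (h x))"

text \<open>Since HOL cannot quantify over types
  inside a formula, the test objects are the LPDs whose carrier lies in the type
  'k list; as k is infinite, this type has cardinality |k|, which bounds the
  cardinality of every finitely generated LPD over k, so this is equivalent to
  freeness in the whole variety.\<close>

definition free_lpd :: "('k::field, 'a) liealg \<Rightarrow> ('a \<Rightarrow> 'a) \<Rightarrow> nat \<Rightarrow> (nat \<Rightarrow> 'a) \<Rightarrow> bool" where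
  "free_lpd F p n m \<longleftrightarrow> lpd F p \<and> (\<forall>i<n. m i \<in> vcar F)
   \<and> (\<forall>(N :: ('k, 'k list) liealg) q f. lpd N q \<and> (\<forall>i<n. f i \<in> vcar N) \<longrightarrow>
        (\<exists>h. lpd_hom F p N q h \<and> (\<forall>i<n. h (m i) = f i)
           \<and> (\<forall>h'. lpd_hom F p N q h' \<and> (\<forall>i<n. h' (m i) = f i) \<longrightarrow> (\<forall>x\<in>vcar F. h' x = h x))))"

definition kerL :: "('k::field, 'a) liealg \<Rightarrow> ('a \<Rightarrow> 'a) \<Rightarrow> ('k, 'a) liealg" where
  "kerL F p = F\<lparr>vcar := {x \<in> vcar F. p x = vzero F}\<rparr>"

definition imV :: "('k::field, 'a) liealg \<Rightarrow> ('a \<Rightarrow> 'a) \<Rightarrow> ('k, 'a) vspace" where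
  "imV F p = \<lparr>vcar = p ` vcar F, vadd = vadd F, vzero = vzero F, vsmul = vsmul F\<rparr>"

end

theory Submission
  imports Defs
begin


locale vsp =
  fixes V :: "('k::field,'a,'b) vspace_scheme"
  assumes vs: "vector_space_on V"
begin

lemma zero_c[simp]: "vzero V \<in> vcar V" using vs unfolding vector_space_on_def by auto
lemma add_c[simp]: "x \<in> vcar V \<Longrightarrow> y \<in> vcar V \<Longrightarrow> vadd V x y \<in> vcar V"
  using vs unfolding vector_space_on_def by auto
lemma smul_c[simp]: "x \<in> vcar V \<Longrightarrow> vsmul V a x \<in> vcar V"
  using vs unfolding vector_space_on_def by auto
lemma add_assoc: "x \<in> vcar V \<Longrightarrow> y \<in> vcar V \<Longrightarrow> z \<in> vcar V \<Longrightarrow> vadd V (vadd V x y) z = vadd V x (vadd V y z)"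
  using vs unfolding vector_space_on_def by auto
lemma add_comm: "x \<in> vcar V \<Longrightarrow> y \<in> vcar V \<Longrightarrow> vadd V x y = vadd V y x"
  using vs unfolding vector_space_on_def by auto
lemma add_lcomm: "x \<in> vcar V \<Longrightarrow> y \<in> vcar V \<Longrightarrow> z \<in> vcar V \<Longrightarrow> vadd V x (vadd V y z) = vadd V y (vadd V x z)"
  by (metis add_assoc add_comm)
lemmas add_ac = add_assoc add_comm add_lcomm
lemma zero_add[simp]: "x \<in> vcar V \<Longrightarrow> vadd V (vzero V) x = x"
  using vs unfolding vector_space_on_def by auto
lemma add_zero[simp]: "x \<in> vcar V \<Longrightarrow> vadd V x (vzero V) = x"
  using add_comm zero_add zero_c by metis
lemma smul_add: "x \<in> vcar V \<Longrightarrow> y \<in> vcar V \<Longrightarrow> vsmul V a (vadd V x y) = vadd V (vsmul V a x) (vsmul V a y)"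
  using vs unfolding vector_space_on_def by auto
lemma add_smul: "x \<in> vcar V \<Longrightarrow> vsmul V (a + b) x = vadd V (vsmul V a x) (vsmul V b x)"
  using vs unfolding vector_space_on_def by auto
lemma smul_smul[simp]: "x \<in> vcar V \<Longrightarrow> vsmul V a (vsmul V b x) = vsmul V (a * b) x"
  using vs unfolding vector_space_on_def by auto
lemma one_smul[simp]: "x \<in> vcar V \<Longrightarrow> vsmul V 1 x = x"
  using vs unfolding vector_space_on_def by auto
lemma inv_ex: "x \<in> vcar V \<Longrightarrow> \<exists>y\<in>vcar V. vadd V x y = vzero V"
  using vs unfolding vector_space_on_def by blast

lemma zero_smul[simp]: assumes x: "x \<in> vcar V" shows "vsmul V 0 x = vzero V"
proof -
  let ?z = "vsmul V 0 x"
  have zz: "vadd V ?z ?z = ?z" using add_smul[OF x, of 0 0] by simp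
  obtain y where y: "y \<in> vcar V" "vadd V ?z y = vzero V" using inv_ex[of ?z] x by auto
  have "vzero V = vadd V (vadd V ?z ?z) y" using zz y by simp
  also have "\<dots> = vadd V ?z (vadd V ?z y)" using add_assoc x y by simp
  also have "\<dots> = ?z" using y x by simp
  finally show ?thesis by simp
qed

lemma neg_r[simp]: "x \<in> vcar V \<Longrightarrow> vadd V x (vsmul V (-1) x) = vzero V"
  using add_smul[of x 1 "-1"] by simp
lemma neg_l[simp]: "x \<in> vcar V \<Longrightarrow> vadd V (vsmul V (-1) x) x = vzero V"
  using neg_r add_comm by simp

lemma smul_zero[simp]: "vsmul V a (vzero V) = vzero V"
  by (metis mult_zero_right smul_smul zero_c zero_smul)

lemma neg_r2[simp]: "x \<in> vcar V \<Longrightarrow> y \<in> vcar V \<Longrightarrow> vadd V x (vadd V (vsmul V (-1) x) y) = y"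
  by (simp flip: add_assoc)
lemma neg_l2[simp]: "x \<in> vcar V \<Longrightarrow> y \<in> vcar V \<Longrightarrow> vadd V (vsmul V (-1) x) (vadd V x y) = y"
  by (simp flip: add_assoc)

lemma eq_of_diff: assumes "a \<in> vcar V" "b \<in> vcar V" "vadd V a (vsmul V (-1) b) = vzero V"
  shows "a = b"
proof -
  have "vadd V (vadd V a (vsmul V (-1) b)) b = a" using assms(1,2) by (simp add: add_assoc)
  then show ?thesis using assms by (metis zero_add)
qed

lemma vsub_c2[simp]: "x \<in> vcar V \<Longrightarrow> y \<in> vcar V \<Longrightarrow> vsub V x y \<in> vcar V"
  by (simp add: vsub_def)

lemma vsub_eq: "vsub V x y = vadd V x (vsmul V (-1) y)" by (simp add: vsub_def)

lemma test6:
  assumes c: "t1 \<in> vcar V" "t2 \<in> vcar V" "t3 \<in> vcar V" "t4 \<in> vcar V" "t5 \<in> vcar V" "t6 \<in> vcar V"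
  shows "vadd V (vadd V (vsub V (vsub V t1 t2) (vsub V t3 t4)) (vsub V (vsub V t3 t5) (vsub V t6 t2)))
     (vsub V (vsub V t6 t4) (vsub V t1 t5)) = vzero V"
proof -
  have "vadd V (vadd V (vsub V (vsub V t1 t2) (vsub V t3 t4)) (vsub V (vsub V t3 t5) (vsub V t6 t2)))
     (vsub V (vsub V t6 t4) (vsub V t1 t5)) =
     vadd V (vadd V t1 (vsmul V (-1) t1)) (vadd V (vadd V t2 (vsmul V (-1) t2)) (vadd V (vadd V t3 (vsmul V (-1) t3))
       (vadd V (vadd V t4 (vsmul V (-1) t4)) (vadd V (vadd V t5 (vsmul V (-1) t5)) (vadd V t6 (vsmul V (-1) t6))))))"
    using c by (simp add: vsub_eq smul_add add_ac del: neg_r neg_l neg_r2 neg_l2)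
  then show ?thesis using c by simp
qed

end

lemma vsub_c[simp]: "vsp V \<Longrightarrow> x \<in> vcar V \<Longrightarrow> y \<in> vcar V \<Longrightarrow> vsub V x y \<in> vcar V"
  by (simp add: vsp.add_c vsp.smul_c vsub_def)

locale lie =
  fixes L :: "('k::field,'a) liealg"
  assumes la: "lie_algebra L"
begin
sublocale vsp L using la unfolding lie_algebra_def vsp_def by blast
lemma br_c[simp]: "x \<in> vcar L \<Longrightarrow> y \<in> vcar L \<Longrightarrow> lbr L x y \<in> vcar L"
  using la unfolding lie_algebra_def by blast
lemma br_add_l: "x \<in> vcar L \<Longrightarrow> y \<in> vcar L \<Longrightarrow> z \<in> vcar L \<Longrightarrow> lbr L (vadd L x y) z = vadd L (lbr L x z) (lbr L y z)"
  using la unfolding lie_algebra_def by blast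
lemma br_add_r: "x \<in> vcar L \<Longrightarrow> y \<in> vcar L \<Longrightarrow> z \<in> vcar L \<Longrightarrow> lbr L z (vadd L x y) = vadd L (lbr L z x) (lbr L z y)"
  using la unfolding lie_algebra_def by blast
lemma br_smul_l[simp]: "x \<in> vcar L \<Longrightarrow> y \<in> vcar L \<Longrightarrow> lbr L (vsmul L a x) y = vsmul L a (lbr L x y)"
  using la unfolding lie_algebra_def by blast
lemma br_smul_r[simp]: "x \<in> vcar L \<Longrightarrow> y \<in> vcar L \<Longrightarrow> lbr L x (vsmul L a y) = vsmul L a (lbr L x y)"
  using la unfolding lie_algebra_def by blast
lemma br_self[simp]: "x \<in> vcar L \<Longrightarrow> lbr L x x = vzero L"
  using la unfolding lie_algebra_def by blast
lemma jacobi: "x \<in> vcar L \<Longrightarrow> y \<in> vcar L \<Longrightarrow> z \<in> vcar L \<Longrightarrow>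
  vadd L (vadd L (lbr L x (lbr L y z)) (lbr L y (lbr L z x))) (lbr L z (lbr L x y)) = vzero L"
  using la unfolding lie_algebra_def by blast
lemma br_zero_l[simp]: "y \<in> vcar L \<Longrightarrow> lbr L (vzero L) y = vzero L"
  using br_smul_l[of "vzero L" y 0] by simp
lemma br_zero_r[simp]: "y \<in> vcar L \<Longrightarrow> lbr L y (vzero L) = vzero L"
  using br_smul_r[of y "vzero L" 0] by simp
lemma anticomm: assumes x: "x \<in> vcar L" and y: "y \<in> vcar L"
  shows "lbr L x y = vsmul L (-1) (lbr L y x)"
proof (rule eq_of_diff)
  have "vzero L = lbr L (vadd L x y) (vadd L x y)" using x y by simp
  also have "\<dots> = vadd L (lbr L x (vadd L x y)) (lbr L y (vadd L x y))" by (rule br_add_l) (simp_all add: x y)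
  also have "\<dots> = vadd L (vadd L (lbr L x x) (lbr L x y)) (vadd L (lbr L y x) (lbr L y y))"
    using x y by (simp only: br_add_r)
  also have "\<dots> = vadd L (lbr L x y) (lbr L y x)" using x y by simp
  finally show "vadd L (lbr L x y) (vsmul L (-1) (vsmul L (-1) (lbr L y x))) = vzero L"
    using x y by simp
qed (use x y in auto)
end

locale rep =
  fixes P :: "('k::field,'p) liealg" and U :: "('k,'u) vspace" and act :: "'p \<Rightarrow> 'u \<Rightarrow> 'u"
  assumes rp: "representation P U act"
begin
sublocale P: lie P using rp unfolding representation_def lie_def by blast
sublocale U: vsp U using rp unfolding representation_def vsp_def by blast
lemma act_c[simp]: "l \<in> vcar P \<Longrightarrow> v \<in> vcar U \<Longrightarrow> act l v \<in> vcar U"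
  using rp unfolding representation_def by blast
lemma act_add_l: "l \<in> vcar P \<Longrightarrow> l' \<in> vcar P \<Longrightarrow> v \<in> vcar U \<Longrightarrow> act (vadd P l l') v = vadd U (act l v) (act l' v)"
  using rp unfolding representation_def by blast
lemma act_smul_l[simp]: "l \<in> vcar P \<Longrightarrow> v \<in> vcar U \<Longrightarrow> act (vsmul P a l) v = vsmul U a (act l v)"
  using rp unfolding representation_def by blast
lemma act_add_r: "l \<in> vcar P \<Longrightarrow> v \<in> vcar U \<Longrightarrow> w \<in> vcar U \<Longrightarrow> act l (vadd U v w) = vadd U (act l v) (act l w)"
  using rp unfolding representation_def by blast
lemma act_smul_r[simp]: "l \<in> vcar P \<Longrightarrow> v \<in> vcar U \<Longrightarrow> act l (vsmul U a v) = vsmul U a (act l v)"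
  using rp unfolding representation_def by blast
lemma act_br: "l \<in> vcar P \<Longrightarrow> l' \<in> vcar P \<Longrightarrow> v \<in> vcar U \<Longrightarrow>
   act (lbr P l l') v = vsub U (act l (act l' v)) (act l' (act l v))"
  using rp unfolding representation_def by blast
lemma act_zero_l[simp]: "v \<in> vcar U \<Longrightarrow> act (vzero P) v = vzero U"
  using act_smul_l[of "vzero P" v 0] by simp
lemma act_zero_r[simp]: "l \<in> vcar P \<Longrightarrow> act l (vzero U) = vzero U"
  using act_smul_r[of l "vzero U" 0] by simp
lemma act_vsub: "l \<in> vcar P \<Longrightarrow> v \<in> vcar U \<Longrightarrow> w \<in> vcar U \<Longrightarrow> act l (vsub U v w) = vsub U (act l v) (act l w)"
  by (simp add: vsub_def act_add_r)
end

definition sdp :: "('k::field,'p) liealg \<Rightarrow> ('k,'u) vspace \<Rightarrow> ('p \<Rightarrow> 'u \<Rightarrow> 'u) \<Rightarrow> ('k, 'p \<times> 'u) liealg" where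
  "sdp P U act = \<lparr>vcar = vcar P \<times> vcar U,
     vadd = \<lambda>x y. (vadd P (fst x) (fst y), vadd U (snd x) (snd y)),
     vzero = (vzero P, vzero U),
     vsmul = \<lambda>a x. (vsmul P a (fst x), vsmul U a (snd x)),
     lbr = \<lambda>x y. (lbr P (fst x) (fst y), vsub U (act (fst x) (snd y)) (act (fst y) (snd x)))\<rparr>"

definition sdpp :: "('k::field,'p) liealg \<Rightarrow> 'p \<times> 'u \<Rightarrow> 'p \<times> 'u" where
  "sdpp P x = (vzero P, snd x)"

context rep begin

lemma sdp_vs: "vector_space_on (sdp P U act)"
proof -
  have inv: "\<forall>x\<in>vcar P \<times> vcar U. \<exists>y\<in>vcar P \<times> vcar U. (vadd P (fst x) (fst y), vadd U (snd x) (snd y)) = (vzero P, vzero U)"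
  proof
    fix x :: "'p \<times> 'u" assume "x \<in> vcar P \<times> vcar U"
    then show "\<exists>y\<in>vcar P \<times> vcar U. (vadd P (fst x) (fst y), vadd U (snd x) (snd y)) = (vzero P, vzero U)"
      by (intro bexI[of _ "(vsmul P (-1) (fst x), vsmul U (-1) (snd x))"]) auto
  qed
  show ?thesis unfolding vector_space_on_def sdp_def using inv
    by (simp add: P.add_ac U.add_ac P.smul_add U.smul_add P.add_smul U.add_smul)
qed

lemma sdp_lie: "lie_algebra (sdp P U act)"
  unfolding lie_algebra_def
proof (intro conjI)
  show "vector_space_on (sdp P U act)" by (rule sdp_vs)
  show "\<forall>x\<in>vcar (sdp P U act). \<forall>y\<in>vcar (sdp P U act). lbr (sdp P U act) x y \<in> vcar (sdp P U act)"
    by (auto simp: sdp_def)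
  show "\<forall>x\<in>vcar (sdp P U act). \<forall>y\<in>vcar (sdp P U act). \<forall>z\<in>vcar (sdp P U act).
        lbr (sdp P U act) (vadd (sdp P U act) x y) z = vadd (sdp P U act) (lbr (sdp P U act) x z) (lbr (sdp P U act) y z)
      \<and> lbr (sdp P U act) z (vadd (sdp P U act) x y) = vadd (sdp P U act) (lbr (sdp P U act) z x) (lbr (sdp P U act) z y)"
    by (auto simp: sdp_def P.br_add_l P.br_add_r act_add_l act_add_r vsub_def U.smul_add U.add_ac)
  show "\<forall>a. \<forall>x\<in>vcar (sdp P U act). \<forall>y\<in>vcar (sdp P U act).
        lbr (sdp P U act) (vsmul (sdp P U act) a x) y = vsmul (sdp P U act) a (lbr (sdp P U act) x y)
      \<and> lbr (sdp P U act) x (vsmul (sdp P U act) a y) = vsmul (sdp P U act) a (lbr (sdp P U act) x y)"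
    by (auto simp: sdp_def vsub_def U.smul_add mult.commute)
  show "\<forall>x\<in>vcar (sdp P U act). lbr (sdp P U act) x x = vzero (sdp P U act)"
    by (auto simp: sdp_def vsub_def)
  show "\<forall>x\<in>vcar (sdp P U act). \<forall>y\<in>vcar (sdp P U act). \<forall>z\<in>vcar (sdp P U act).
        vadd (sdp P U act) (vadd (sdp P U act) (lbr (sdp P U act) x (lbr (sdp P U act) y z)) (lbr (sdp P U act) y (lbr (sdp P U act) z x))) (lbr (sdp P U act) z (lbr (sdp P U act) x y)) = vzero (sdp P U act)"
  proof (intro ballI)
    fix x y z assume xyz: "x \<in> vcar (sdp P U act)" "y \<in> vcar (sdp P U act)" "z \<in> vcar (sdp P U act)"
    obtain a u where x: "x = (a,u)" "a \<in> vcar P" "u \<in> vcar U" using xyz by (auto simp: sdp_def)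
    obtain b v where y: "y = (b,v)" "b \<in> vcar P" "v \<in> vcar U" using xyz by (auto simp: sdp_def)
    obtain c w where z: "z = (c,w)" "c \<in> vcar P" "w \<in> vcar U" using xyz by (auto simp: sdp_def)
    have j2: "vadd U (vadd U (vsub U (vsub U (act a (act b w)) (act a (act c v))) (vsub U (act b (act c u)) (act c (act b u))))
        (vsub U (vsub U (act b (act c u)) (act b (act a w))) (vsub U (act c (act a v)) (act a (act c v)))))
        (vsub U (vsub U (act c (act a v)) (act c (act b u))) (vsub U (act a (act b w)) (act b (act a w)))) = vzero U"
      by (rule U.test6) (use x y z in simp_all)
    show "vadd (sdp P U act) (vadd (sdp P U act) (lbr (sdp P U act) x (lbr (sdp P U act) y z)) (lbr (sdp P U act) y (lbr (sdp P U act) z x))) (lbr (sdp P U act) z (lbr (sdp P U act) x y)) = vzero (sdp P U act)"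
      using x y z j2 P.jacobi[of a b c] by (simp add: sdp_def act_vsub act_br)
  qed
qed

lemma sdp_lpd: "lpd (sdp P U act) (sdpp P)"
  unfolding lpd_def
proof (intro conjI)
  show "lie_algebra (sdp P U act)" by (rule sdp_lie)
  show "linear_map_on (sdp P U act) (sdp P U act) (sdpp P)"
    by (auto simp: linear_map_on_def sdp_def sdpp_def)
  show "\<forall>x\<in>vcar (sdp P U act). sdpp P (sdpp P x) = sdpp P x" by (simp add: sdpp_def)
  show "\<forall>x\<in>vcar (sdp P U act). \<forall>y\<in>vcar (sdp P U act). sdpp P (lbr (sdp P U act) x y) =
      vadd (sdp P U act) (lbr (sdp P U act) (sdpp P x) y) (lbr (sdp P U act) x (sdpp P y))"
    by (auto simp: sdp_def sdpp_def vsub_def U.add_ac)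
qed
end


lemma ball_img: "(\<forall>x\<in>f ` A. P x) = (\<forall>x\<in>A. P (f x))" by blast
lemma bex_img: "(\<exists>x\<in>f ` A. P x) = (\<exists>x\<in>A. P (f x))" by blast

lemma vs_restrict:
  fixes V :: "('k::field,'a,'b) vspace_scheme" and W :: "('k,'a,'c) vspace_scheme"
  assumes V: "vector_space_on V" and S: "S \<subseteq> vcar V" "vzero V \<in> S"
    "\<forall>x\<in>S. \<forall>y\<in>S. vadd V x y \<in> S" "\<forall>a. \<forall>x\<in>S. vsmul V a x \<in> S"
    and W: "vcar W = S" "vadd W = vadd V" "vzero W = vzero V" "vsmul W = vsmul V"
  shows "vector_space_on W"
proof -
  interpret vsp V by (rule vsp.intro) (rule V)
  have inv: "\<forall>x\<in>S. \<exists>y\<in>S. vadd V x y = vzero V"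
  proof
    fix x assume "x \<in> S" then show "\<exists>y\<in>S. vadd V x y = vzero V"
      using S by (intro bexI[of _ "vsmul V (-1) x"]) auto
  qed
  have s: "\<And>x. x \<in> S \<Longrightarrow> x \<in> vcar V" using S by blast
  show ?thesis unfolding vector_space_on_def W using S inv
    by (simp add: s add_ac smul_add add_smul)
qed

lemma lie_restrict:
  fixes L W :: "('k::field,'a) liealg"
  assumes L: "lie_algebra L" and S: "S \<subseteq> vcar L" "vzero L \<in> S"
    "\<forall>x\<in>S. \<forall>y\<in>S. vadd L x y \<in> S" "\<forall>a. \<forall>x\<in>S. vsmul L a x \<in> S"
    "\<forall>x\<in>S. \<forall>y\<in>S. lbr L x y \<in> S"
    and W: "vcar W = S" "vadd W = vadd L" "vzero W = vzero L" "vsmul W = vsmul L" "lbr W = lbr L"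
  shows "lie_algebra W"
proof -
  interpret lie L by (rule lie.intro) (rule L)
  have s: "\<And>x. x \<in> S \<Longrightarrow> x \<in> vcar L" using S by blast
  have "vector_space_on W" by (rule vs_restrict[OF vs S(1-4) W(1-4)])
  then show ?thesis unfolding lie_algebra_def W using S
    by (simp add: s br_add_l br_add_r jacobi)
qed

lemma lpd_restrict:
  fixes L W :: "('k::field,'a) liealg"
  assumes L: "lpd L q" and S: "S \<subseteq> vcar L" "vzero L \<in> S"
    "\<forall>x\<in>S. \<forall>y\<in>S. vadd L x y \<in> S" "\<forall>a. \<forall>x\<in>S. vsmul L a x \<in> S"
    "\<forall>x\<in>S. \<forall>y\<in>S. lbr L x y \<in> S" "\<forall>x\<in>S. q x \<in> S"
    and W: "vcar W = S" "vadd W = vadd L" "vzero W = vzero L" "vsmul W = vsmul L" "lbr W = lbr L"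
  shows "lpd W q"
proof -
  have s: "\<And>x. x \<in> S \<Longrightarrow> x \<in> vcar L" using S by blast
  have "lie_algebra W" by (rule lie_restrict[OF _ S(1-5) W]) (use L in \<open>simp add: lpd_def\<close>)
  then show ?thesis using L S unfolding lpd_def linear_map_on_def W by (simp add: s)
qed

datatype 'k tm = Gen nat | Zr | Ad "'k tm" "'k tm" | Sm 'k "'k tm" | Bk "'k tm" "'k tm" | Pj "'k tm"

primrec ev :: "('k::field,'a) liealg \<Rightarrow> ('a \<Rightarrow> 'a) \<Rightarrow> (nat \<Rightarrow> 'a) \<Rightarrow> 'k tm \<Rightarrow> 'a" where
  "ev L q G (Gen i) = G i"
| "ev L q G Zr = vzero L"
| "ev L q G (Ad a b) = vadd L (ev L q G a) (ev L q G b)"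
| "ev L q G (Sm c a) = vsmul L c (ev L q G a)"
| "ev L q G (Bk a b) = lbr L (ev L q G a) (ev L q G b)"
| "ev L q G (Pj a) = q (ev L q G a)"

lemma ev_c: assumes "lpd L q" "\<And>i. G i \<in> vcar L" shows "ev L q G t \<in> vcar L"
proof -
  interpret lie L using assms(1) unfolding lpd_def lie_def by blast
  have "\<And>x. x \<in> vcar L \<Longrightarrow> q x \<in> vcar L" using assms(1) unfolding lpd_def linear_map_on_def by blast
  then show ?thesis by (induction t) (auto simp: assms(2))
qed

primrec enc :: "'k::field_char_0 tm \<Rightarrow> 'k list" where
  "enc (Gen i) = [0, of_nat i]"
| "enc Zr = [1]"
| "enc (Ad a b) = 2 # enc a @ enc b"
| "enc (Sm c a) = 3 # c # enc a"
| "enc (Bk a b) = 4 # enc a @ enc b"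
| "enc (Pj a) = 5 # enc a"

lemma enc_pref: "enc a @ xs = enc b @ ys \<Longrightarrow> a = b \<and> xs = ys"
proof (induction a arbitrary: b xs ys)
  case (Gen i)
  then show ?case by (cases b) simp_all
next
  case Zr
  then show ?case by (cases b) simp_all
next
  case (Ad a1 a2)
  note pr = Ad.prems and ih1 = Ad.IH(1) and ih2 = Ad.IH(2)
  show ?case
  proof (cases b)
    case (Ad b1 b2)
    with pr have "enc a1 @ (enc a2 @ xs) = enc b1 @ (enc b2 @ ys)" by simp
    with ih1 have "a1 = b1" "enc a2 @ xs = enc b2 @ ys" by blast+
    with ih2 \<open>b = _\<close> show ?thesis by blast
  qed (use pr in simp_all)
next
  case (Bk a1 a2)
  note pr = Bk.prems and ih1 = Bk.IH(1) and ih2 = Bk.IH(2)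
  show ?case
  proof (cases b)
    case (Bk b1 b2)
    with pr have "enc a1 @ (enc a2 @ xs) = enc b1 @ (enc b2 @ ys)" by simp
    with ih1 have "a1 = b1" "enc a2 @ xs = enc b2 @ ys" by blast+
    with ih2 \<open>b = _\<close> show ?thesis by blast
  qed (use pr in simp_all)
next
  case (Sm c a)
  note pr = Sm.prems and ih = Sm.IH
  show ?case
  proof (cases b)
    case (Sm d b1)
    with pr have "c = d" "enc a @ xs = enc b1 @ ys" by simp_all
    with ih \<open>b = _\<close> show ?thesis by blast
  qed (use pr in simp_all)
next
  case (Pj a)
  note pr = Pj.prems and ih = Pj.IH
  show ?case
  proof (cases b)
    case (Pj b1)
    with pr have "enc a @ xs = enc b1 @ ys" by simp_all
    with ih \<open>b = _\<close> show ?thesis by blast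
  qed (use pr in simp_all)
qed

lemma enc_inj: "inj enc"
  using enc_pref[where xs="[]" and ys="[]"] by (auto intro: injI)




definition tr :: "('a \<Rightarrow> 'c) \<Rightarrow> ('k::field,'a) liealg \<Rightarrow> ('k,'c) liealg" where
  "tr c L = \<lparr>vcar = c ` vcar L,
     vadd = \<lambda>x y. c (vadd L (inv_into (vcar L) c x) (inv_into (vcar L) c y)),
     vzero = c (vzero L),
     vsmul = \<lambda>a x. c (vsmul L a (inv_into (vcar L) c x)),
     lbr = \<lambda>x y. c (lbr L (inv_into (vcar L) c x) (inv_into (vcar L) c y))\<rparr>"

definition trq :: "('a \<Rightarrow> 'c) \<Rightarrow> ('k::field,'a) liealg \<Rightarrow> ('a \<Rightarrow> 'a) \<Rightarrow> 'c \<Rightarrow> 'c" where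
  "trq c L q = (\<lambda>x. c (q (inv_into (vcar L) c x)))"

lemma tr_lpd:
  assumes L: "lpd L q" and c: "inj_on c (vcar L)"
  shows "lpd (tr c L) (trq c L q)"
proof -
  interpret lie L using L unfolding lpd_def lie_def by blast
  have qc: "\<And>x. x \<in> vcar L \<Longrightarrow> q x \<in> vcar L" using L unfolding lpd_def linear_map_on_def by blast
  have ql: "\<And>x y. x \<in> vcar L \<Longrightarrow> y \<in> vcar L \<Longrightarrow> q (vadd L x y) = vadd L (q x) (q y)"
    "\<And>a x. x \<in> vcar L \<Longrightarrow> q (vsmul L a x) = vsmul L a (q x)"
    "\<And>x. x \<in> vcar L \<Longrightarrow> q (q x) = q x"
    "\<And>x y. x \<in> vcar L \<Longrightarrow> y \<in> vcar L \<Longrightarrow> q (lbr L x y) = vadd L (lbr L (q x) y) (lbr L x (q y))"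
    using L unfolding lpd_def linear_map_on_def by blast+
  have vs: "vector_space_on (tr c L)"
  proof -
    have inv: "\<forall>x\<in>vcar L. \<exists>y\<in>vcar L. c (vadd L x y) = c (vzero L)"
      using inv_ex by metis
    show ?thesis unfolding vector_space_on_def tr_def
      using c inv by (simp add: ball_img bex_img add_ac smul_add add_smul)
  qed
  have la: "lie_algebra (tr c L)"
    unfolding lie_algebra_def using vs c
    by (simp add: tr_def ball_img br_add_l br_add_r jacobi)
  show ?thesis
    unfolding lpd_def linear_map_on_def using la c
    by (simp add: tr_def trq_def ball_img qc ql)
qed

lemma hom_back:
  assumes L: "lpd L q" and c: "inj_on c (vcar L)"
    and h: "lpd_hom F p (tr c L) (trq c L q) h"
  shows "lpd_hom F p L q (\<lambda>x. inv_into (vcar L) c (h x))"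
proof -
  interpret lie L using L unfolding lpd_def lie_def by blast
  have qc: "\<And>x. x \<in> vcar L \<Longrightarrow> q x \<in> vcar L" using L unfolding lpd_def linear_map_on_def by blast
  have hc: "\<And>x. x \<in> vcar F \<Longrightarrow> h x \<in> c ` vcar L"
    using h unfolding lpd_hom_def lie_hom_def linear_map_on_def tr_def by simp
  have dc: "\<And>x. x \<in> vcar F \<Longrightarrow> inv_into (vcar L) c (h x) \<in> vcar L"
    using hc by (meson inv_into_into)
  show ?thesis
    using h c dc unfolding lpd_hom_def lie_hom_def linear_map_on_def tr_def trq_def
    by (simp add: qc)
qed


lemma (in lie) br_br:
  assumes x: "x \<in> vcar L" and y: "y \<in> vcar L" and z: "z \<in> vcar L"
  shows "lbr L (lbr L x y) z = vsub L (lbr L x (lbr L y z)) (lbr L y (lbr L x z))"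
proof -
  have B: "lbr L y (lbr L z x) = vsmul L (-1) (lbr L y (lbr L x z))"
    using anticomm[OF z x] x y z by simp
  have C: "lbr L z (lbr L x y) = vsmul L (-1) (lbr L (lbr L x y) z)"
    using anticomm[OF z, of "lbr L x y"] x y z by simp
  have "vadd L (vadd L (lbr L x (lbr L y z)) (vsmul L (-1) (lbr L y (lbr L x z)))) (vsmul L (-1) (lbr L (lbr L x y) z)) = vzero L"
    using jacobi[OF x y z] unfolding B C .
  then have "vadd L (lbr L x (lbr L y z)) (vsmul L (-1) (lbr L y (lbr L x z))) = lbr L (lbr L x y) z"
    by (rule eq_of_diff[rotated 2]) (use x y z in simp_all)
  then show ?thesis by (simp add: vsub_def)
qed

lemma ker_im_rep:
  assumes F: "lpd F p"
  shows "representation (kerL F p) (imV F p) (lbr F)"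
proof -
  interpret lie F using F unfolding lpd_def lie_def by blast
  have pc: "\<And>x. x \<in> vcar F \<Longrightarrow> p x \<in> vcar F" using F unfolding lpd_def linear_map_on_def by blast
  have pl: "\<And>x y. x \<in> vcar F \<Longrightarrow> y \<in> vcar F \<Longrightarrow> p (vadd F x y) = vadd F (p x) (p y)"
    "\<And>a x. x \<in> vcar F \<Longrightarrow> p (vsmul F a x) = vsmul F a (p x)"
    "\<And>x. x \<in> vcar F \<Longrightarrow> p (p x) = p x"
    "\<And>x y. x \<in> vcar F \<Longrightarrow> y \<in> vcar F \<Longrightarrow> p (lbr F x y) = vadd F (lbr F (p x) y) (lbr F x (p y))"
    using F unfolding lpd_def linear_map_on_def by blast+
  have p0: "p (vzero F) = vzero F" using pl(2)[of "vzero F" 0] pc[of "vzero F"] by simp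
  define K where "K = {x \<in> vcar F. p x = vzero F}"
  have kk: "vcar (kerL F p) = K" "vadd (kerL F p) = vadd F" "vzero (kerL F p) = vzero F"
     "vsmul (kerL F p) = vsmul F" "lbr (kerL F p) = lbr F"
    by (simp_all add: kerL_def K_def)
  have ii: "vcar (imV F p) = p ` vcar F" "vadd (imV F p) = vadd F" "vzero (imV F p) = vzero F"
     "vsmul (imV F p) = vsmul F"
    by (simp_all add: imV_def)
  have Ks: "K \<subseteq> vcar F" by (auto simp: K_def)
  have lk: "lie_algebra (kerL F p)"
    by (rule lie_restrict[OF la Ks _ _ _ _ kk]) (auto simp: K_def p0 pl)
  have Is: "p ` vcar F \<subseteq> vcar F" using pc by blast
  have iz: "vzero F \<in> p ` vcar F" using p0 by (metis zero_c image_eqI)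
  have ia: "\<forall>x\<in>p ` vcar F. \<forall>y\<in>p ` vcar F. vadd F x y \<in> p ` vcar F"
    by (auto simp flip: pl(1) intro!: imageI)
  have ism: "\<forall>a. \<forall>x\<in>p ` vcar F. vsmul F a x \<in> p ` vcar F"
    by (auto simp flip: pl(2) intro!: imageI)
  have vi: "vector_space_on (imV F p)"
    by (rule vs_restrict[OF vs Is iz ia ism ii])
  have act_c: "lbr F l v \<in> p ` vcar F" if lv: "l \<in> K" "v \<in> p ` vcar F" for l v
  proof -
    obtain w where w: "w \<in> vcar F" "v = p w" using lv by blast
    have l: "l \<in> vcar F" "p l = vzero F" using lv by (auto simp: K_def)
    have "p (lbr F l v) = lbr F l v" using w l by (simp add: pl pc)
    then show ?thesis using l w pc by (metis br_c image_eqI)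
  qed
  have Kc: "\<And>x. x \<in> K \<Longrightarrow> x \<in> vcar F" and Ic: "\<And>x. x \<in> p ` vcar F \<Longrightarrow> x \<in> vcar F"
    using Ks Is by blast+
  show ?thesis
    unfolding representation_def kk ii
    using lk vi act_c
    by (simp add: Kc Ic br_add_l br_add_r br_br vsub_def imV_def)
qed

theorem theorem2:
  fixes F :: "('k::field_char_0, 'a) liealg" and p :: "'a \<Rightarrow> 'a"
    and n :: nat and m :: "nat \<Rightarrow> 'a"
  assumes "free_lpd F p n m"
  shows "representation (kerL F p) (imV F p) (lbr F)
    \<and> (\<forall>(P :: ('k, 'p) liealg) (U :: ('k, 'u) vspace) act f g.
         representation P U act
         \<and> f ` ((\<lambda>i. vsub F (m i) (p (m i))) ` {..<n}) \<subseteq> vcar P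
         \<and> g ` ((\<lambda>i. p (m i)) ` {..<n}) \<subseteq> vcar U
         \<longrightarrow> (\<exists>\<phi> \<psi>. rep_hom (kerL F p) (imV F p) (lbr F) P U act \<phi> \<psi>
                 \<and> (\<forall>x \<in> (\<lambda>i. vsub F (m i) (p (m i))) ` {..<n}. \<phi> x = f x)
                 \<and> (\<forall>y \<in> (\<lambda>i. p (m i)) ` {..<n}. \<psi> y = g y)))"
proof -
  have F: "lpd F p" using assms unfolding free_lpd_def by blast
  have mc: "\<And>i. i < n \<Longrightarrow> m i \<in> vcar F" using assms unfolding free_lpd_def by blast
  interpret Fl: lie F using F unfolding lpd_def lie_def by blast
  have pc: "\<And>x. x \<in> vcar F \<Longrightarrow> p x \<in> vcar F" using F unfolding lpd_def linear_map_on_def by blast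
  have pl: "\<And>x y. x \<in> vcar F \<Longrightarrow> y \<in> vcar F \<Longrightarrow> p (vadd F x y) = vadd F (p x) (p y)"
    "\<And>a x. x \<in> vcar F \<Longrightarrow> p (vsmul F a x) = vsmul F a (p x)"
    "\<And>x. x \<in> vcar F \<Longrightarrow> p (p x) = p x"
    using F unfolding lpd_def linear_map_on_def by blast+
  have p0: "p (vzero F) = vzero F" using pl(2)[of "vzero F" 0] pc[of "vzero F"] by simp
  show ?thesis
  proof (intro conjI allI impI)
    show "representation (kerL F p) (imV F p) (lbr F)" by (rule ker_im_rep[OF F])
    fix P :: "('k, 'p) liealg" and U :: "('k, 'u) vspace" and act f g
    assume A: "representation P U act
         \<and> f ` ((\<lambda>i. vsub F (m i) (p (m i))) ` {..<n}) \<subseteq> vcar P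
         \<and> g ` ((\<lambda>i. p (m i)) ` {..<n}) \<subseteq> vcar U"
    interpret rep P U act using A by (simp add: rep_def)
    define fv where "fv i = f (vsub F (m i) (p (m i)))" for i
    define gv where "gv i = g (p (m i))" for i
    define G where "G i = (if i < n then (fv i, gv i) else (vzero P, vzero U))" for i
    define SD where "SD = sdp P U act"
    have SDl: "lpd SD (sdpp P)" unfolding SD_def by (rule sdp_lpd)
    have Gc: "\<And>i. G i \<in> vcar SD" using A by (auto simp: G_def SD_def sdp_def fv_def gv_def)
    define S where "S = range (ev SD (sdpp P) G)"
    define L where "L = SD\<lparr>vcar := S\<rparr>"
    have evc: "\<And>t. ev SD (sdpp P) G t \<in> vcar SD" by (rule ev_c[OF SDl]) (rule Gc)
    have Sc: "S \<subseteq> vcar SD" unfolding S_def using evc by blast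
    have Ll: "lpd L (sdpp P)"
    proof (rule lpd_restrict[OF SDl Sc])
      show "vzero SD \<in> S" unfolding S_def by (rule range_eqI[of _ _ Zr]) simp
      show "\<forall>x\<in>S. \<forall>y\<in>S. vadd SD x y \<in> S"
      proof (intro ballI)
        fix x y assume "x \<in> S" "y \<in> S"
        then obtain s t where "x = ev SD (sdpp P) G s" "y = ev SD (sdpp P) G t" unfolding S_def by blast
        then show "vadd SD x y \<in> S" unfolding S_def by (intro range_eqI[of _ _ "Ad s t"]) simp
      qed
      show "\<forall>a. \<forall>x\<in>S. vsmul SD a x \<in> S"
      proof (intro ballI allI)
        fix a x assume "x \<in> S"
        then obtain s where "x = ev SD (sdpp P) G s" unfolding S_def by blast
        then show "vsmul SD a x \<in> S" unfolding S_def by (intro range_eqI[of _ _ "Sm a s"]) simp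
      qed
      show "\<forall>x\<in>S. \<forall>y\<in>S. lbr SD x y \<in> S"
      proof (intro ballI)
        fix x y assume "x \<in> S" "y \<in> S"
        then obtain s t where "x = ev SD (sdpp P) G s" "y = ev SD (sdpp P) G t" unfolding S_def by blast
        then show "lbr SD x y \<in> S" unfolding S_def by (intro range_eqI[of _ _ "Bk s t"]) simp
      qed
      show "\<forall>x\<in>S. sdpp P x \<in> S"
      proof (intro ballI)
        fix x assume "x \<in> S"
        then obtain s where "x = ev SD (sdpp P) G s" unfolding S_def by blast
        then show "sdpp P x \<in> S" unfolding S_def by (intro range_eqI[of _ _ "Pj s"]) simp
      qed
    qed (simp_all add: L_def)
    have vL: "vcar L = S" by (simp add: L_def)
    define code where "code s = enc (SOME t. ev SD (sdpp P) G t = s)" for s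
    have cinj: "inj_on code (vcar L)"
    proof (rule inj_onI)
      fix x y assume xy: "x \<in> vcar L" "y \<in> vcar L" "code x = code y"
      have ex: "\<exists>t. ev SD (sdpp P) G t = x" "\<exists>t. ev SD (sdpp P) G t = y" using xy vL S_def by auto
      have "(SOME t. ev SD (sdpp P) G t = x) = (SOME t. ev SD (sdpp P) G t = y)"
        using xy(3) enc_inj unfolding code_def inj_def by blast
      then show "x = y" using someI_ex[OF ex(1)] someI_ex[OF ex(2)] by metis
    qed
    define N where "N = tr code L"
    define q where "q = trq code L (sdpp P)"
    have Nl: "lpd N q" unfolding N_def q_def by (rule tr_lpd[OF Ll cinj])
    have GS: "\<And>i. G i \<in> vcar L" unfolding vL S_def by (rule range_eqI[of _ _ "Gen _"]) simp
    have fN: "\<forall>i<n. code (G i) \<in> vcar N" using GS by (simp add: N_def tr_def)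
    note fr = conjunct2[OF conjunct2[OF assms[unfolded free_lpd_def]]]
    obtain h where h: "lpd_hom F p N q h" "\<forall>i<n. h (m i) = code (G i)"
      using fr[rule_format, of N q "\<lambda>i. code (G i)"] Nl fN by blast
    define \<Phi> where "\<Phi> x = inv_into (vcar L) code (h x)" for x
    have Ph: "lpd_hom F p L (sdpp P) \<Phi>" unfolding \<Phi>_def
      by (rule hom_back[OF Ll cinj]) (use h(1) in \<open>simp add: N_def q_def\<close>)
    have Pm: "\<Phi> (m i) = (fv i, gv i)" if i: "i < n" for i
    proof -
      have g: "(fv i, gv i) \<in> vcar L" using GS[of i] i by (simp add: G_def)
      show ?thesis using h(2) i g cinj by (simp add: \<Phi>_def G_def)
    qed
    have Phc: "\<And>x. x \<in> vcar F \<Longrightarrow> \<Phi> x \<in> vcar P \<times> vcar U"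
      using Ph Sc unfolding lpd_hom_def lie_hom_def linear_map_on_def by (auto simp: L_def SD_def sdp_def)
    have Pa: "\<And>x y. x \<in> vcar F \<Longrightarrow> y \<in> vcar F \<Longrightarrow> \<Phi> (vadd F x y) = vadd SD (\<Phi> x) (\<Phi> y)"
      "\<And>a x. x \<in> vcar F \<Longrightarrow> \<Phi> (vsmul F a x) = vsmul SD a (\<Phi> x)"
      "\<And>x y. x \<in> vcar F \<Longrightarrow> y \<in> vcar F \<Longrightarrow> \<Phi> (lbr F x y) = lbr SD (\<Phi> x) (\<Phi> y)"
      "\<And>x. x \<in> vcar F \<Longrightarrow> \<Phi> (p x) = sdpp P (\<Phi> x)"
      using Ph unfolding lpd_hom_def lie_hom_def linear_map_on_def by (simp_all add: L_def)
    have Pp: "\<And>x. x \<in> vcar F \<Longrightarrow> fst (\<Phi> (p x)) = vzero P"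
      by (simp add: Pa(4) sdpp_def)
    define \<phi> where "\<phi> x = fst (\<Phi> x)" for x
    define \<psi> where "\<psi> x = snd (\<Phi> x)" for x
    have K: "vcar (kerL F p) = {x \<in> vcar F. p x = vzero F}" "vadd (kerL F p) = vadd F"
       "vsmul (kerL F p) = vsmul F" "lbr (kerL F p) = lbr F"
      by (simp_all add: kerL_def)
    have I: "vcar (imV F p) = p ` vcar F" "vadd (imV F p) = vadd F" "vsmul (imV F p) = vsmul F"
      by (simp_all add: imV_def)
    have fstc: "\<And>x. x \<in> vcar F \<Longrightarrow> fst (\<Phi> x) \<in> vcar P" and sndc: "\<And>x. x \<in> vcar F \<Longrightarrow> snd (\<Phi> x) \<in> vcar U"
      using Phc by (auto simp: mem_Times_iff)
    have rh: "rep_hom (kerL F p) (imV F p) (lbr F) P U act \<phi> \<psi>"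
      unfolding rep_hom_def lie_hom_def linear_map_on_def K I
    proof (intro conjI ballI allI)
      fix x assume "x \<in> {x \<in> vcar F. p x = vzero F}"
      then show "\<phi> x \<in> vcar P" using fstc by (simp add: \<phi>_def)
    next
      fix x y assume "x \<in> {x \<in> vcar F. p x = vzero F}" "y \<in> {x \<in> vcar F. p x = vzero F}"
      then show "\<phi> (vadd F x y) = vadd P (\<phi> x) (\<phi> y)" "\<phi> (lbr F x y) = lbr P (\<phi> x) (\<phi> y)"
        by (simp_all add: \<phi>_def Pa SD_def sdp_def)
    next
      fix a x assume "x \<in> {x \<in> vcar F. p x = vzero F}"
      then show "\<phi> (vsmul F a x) = vsmul P a (\<phi> x)" by (simp add: \<phi>_def Pa SD_def sdp_def)
    next
      fix x assume "x \<in> p ` vcar F"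
      then show "\<psi> x \<in> vcar U" using sndc pc by (auto simp: \<psi>_def)
    next
      fix x y assume "x \<in> p ` vcar F" "y \<in> p ` vcar F"
      then show "\<psi> (vadd F x y) = vadd U (\<psi> x) (\<psi> y)"
        using pc by (auto simp: \<psi>_def Pa SD_def sdp_def)
    next
      fix a x assume "x \<in> p ` vcar F"
      then show "\<psi> (vsmul F a x) = vsmul U a (\<psi> x)"
        using pc by (auto simp: \<psi>_def Pa SD_def sdp_def)
    next
      fix l v assume l: "l \<in> {x \<in> vcar F. p x = vzero F}" and v: "v \<in> p ` vcar F"
      obtain w where w: "w \<in> vcar F" "v = p w" using v by blast
      have "fst (\<Phi> v) = vzero P" using w Pp by simp
      then show "act (\<phi> l) (\<psi> v) = \<psi> (lbr F l v)"
        using l w pc fstc sndc by (simp add: \<phi>_def \<psi>_def Pa SD_def sdp_def vsub_def sdpp_def)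
    qed
    show "\<exists>\<phi> \<psi>. rep_hom (kerL F p) (imV F p) (lbr F) P U act \<phi> \<psi>
                 \<and> (\<forall>x \<in> (\<lambda>i. vsub F (m i) (p (m i))) ` {..<n}. \<phi> x = f x)
                 \<and> (\<forall>y \<in> (\<lambda>i. p (m i)) ` {..<n}. \<psi> y = g y)"
    proof (intro exI conjI ballI)
      show "rep_hom (kerL F p) (imV F p) (lbr F) P U act \<phi> \<psi>" by (rule rh)
    next
      fix x assume "x \<in> (\<lambda>i. vsub F (m i) (p (m i))) ` {..<n}"
      then obtain i where i: "i < n" "x = vsub F (m i) (p (m i))" by blast
      have "fv i \<in> vcar P" using A i by (auto simp: fv_def)
      then show "\<phi> x = f x"
        using i mc[OF i(1)] pc Pm[OF i(1)] by (simp add: \<phi>_def vsub_def Pa SD_def sdp_def sdpp_def fv_def)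
    next
      fix y assume "y \<in> (\<lambda>i. p (m i)) ` {..<n}"
      then obtain i where i: "i < n" "y = p (m i)" by blast
      then show "\<psi> y = g y"
        using mc[OF i(1)] Pm[OF i(1)] by (simp add: \<psi>_def Pa sdpp_def gv_def)
    qed
  qed
qed


end
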